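(* Let $(\mathbb{X},\mathcal{X},\mu,T)$ be a non-atomic probability space with $T$ invertible, measure-preserving and ergodic, and let $(l(n))_{n\ge1}$ be an increasing sequence of positive integers. Then there exists a measurable function $v:\mathbb{X}\to[0,\infty)$ (finite a.e.) such that $\limsup_n \frac{1}{l(n)}\,v\circ T^n=+\infty$ $\mu$-a.e. *)

theory Defs
  imports "HOL-Probability.Probability"
begin

definition measure_preserving_map :: "'a measure \<Rightarrow> ('a \<Rightarrow> 'a) \<Rightarrow> bool" where
  "measure_preserving_map M T \<longleftrightarrow> T \<in> measurable M M \<and> distr M M T = M"

definition invertible_mp_map :: "'a measure \<Rightarrow> ('a \<Rightarrow> 'a) \<Rightarrow> bool" where
  "invertible_mp_map M T \<longleftrightarrow> measure_preserving_map M T \<and> bij_betw T (space M) (space M)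
     \<and> measure_preserving_map M (inv_into (space M) T)"

definition ergodic_map :: "'a measure \<Rightarrow> ('a \<Rightarrow> 'a) \<Rightarrow> bool" where
  "ergodic_map M T \<longleftrightarrow> (\<forall>A\<in>sets M. T -` A \<inter> space M = A \<longrightarrow> measure M A = 0 \<or> measure M A = 1)"

definition non_atomic :: "'a measure \<Rightarrow> bool" where
  "non_atomic M \<longleftrightarrow> (\<forall>A\<in>sets M. measure M A > 0 \<longrightarrow>
     (\<exists>B\<in>sets M. B \<subseteq> A \<and> 0 < measure M B \<and> measure M B < measure M A))"

end

theory Submission
  imports Defs
begin

definition split_set :: "'a measure \<Rightarrow> 'a set \<Rightarrow> 'a set" where
  "split_set M A = (SOME B. B \<in> sets M \<and> B \<subseteq> A \<and> 0 < measure M B \<and> measure M B < measure M A)"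

primrec chain_set :: "'a measure \<Rightarrow> nat \<Rightarrow> 'a set" where
  "chain_set M 0 = space M"
| "chain_set M (Suc n) = chain_set M n - split_set M (chain_set M n)"

lemma split_set_props:
  assumes "non_atomic M" "A \<in> sets M" "measure M A > 0"
  shows "split_set M A \<in> sets M \<and> split_set M A \<subseteq> A \<and> 0 < measure M (split_set M A)
     \<and> measure M (split_set M A) < measure M A"
proof -
  from assms obtain B where "B \<in> sets M \<and> B \<subseteq> A \<and> 0 < measure M B \<and> measure M B < measure M A"
    unfolding non_atomic_def by blast
  then show ?thesis unfolding split_set_def by (rule someI)
qed

lemma chain_props:
  assumes "prob_space M" "non_atomic M"
  shows "chain_set M n \<in> sets M \<and> measure M (chain_set M n) > 0"
proof (induction n)
  case 0
  then show ?case using assms(1) by (simp add: prob_space.prob_space)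
next
  case (Suc n)
  let ?A = "chain_set M n" let ?B = "split_set M ?A"
  have B: "?B \<in> sets M" "?B \<subseteq> ?A" "0 < measure M ?B" "measure M ?B < measure M ?A"
    using split_set_props[OF assms(2)] Suc by auto
  interpret prob_space M by fact
  have "measure M (?A - ?B) = measure M ?A - measure M ?B"
    using B Suc by (simp add: finite_measure_Diff)
  then show ?case using B Suc by auto
qed

lemma chain_mono: "m \<le> n \<Longrightarrow> chain_set M n \<subseteq> chain_set M m"
  by (induction n rule: dec_induct) auto

lemma disjoint_pos_sets:
  assumes "prob_space M" "non_atomic M"
  shows "\<exists>S::nat \<Rightarrow> 'a set. (\<forall>k. S k \<in> sets M \<and> measure M (S k) > 0) \<and>
     (\<forall>i j. i \<noteq> j \<longrightarrow> S i \<inter> S j = {})"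
proof (intro exI conjI allI impI)
  let ?S = "\<lambda>k. split_set M (chain_set M k)"
  fix k
  show "?S k \<in> sets M" "measure M (?S k) > 0"
    using split_set_props[OF assms(2)] chain_props[OF assms] by auto
next
  let ?S = "\<lambda>k. split_set M (chain_set M k)"
  have sub: "?S k \<subseteq> chain_set M k" for k
    using split_set_props[OF assms(2)] chain_props[OF assms] by auto
  have d: "i < j \<Longrightarrow> ?S i \<inter> ?S j = {}" for i j
  proof -
    assume "i < j"
    then have "chain_set M j \<subseteq> chain_set M (Suc i)" by (intro chain_mono) auto
    then show ?thesis using sub[of j] by auto
  qed
  fix i j :: nat assume "i \<noteq> j"
  then show "?S i \<inter> ?S j = {}" using d[of i j] d[of j i] by (cases "i < j") auto
qed

lemma recurrence:
  assumes P: "prob_space M" and mp: "measure_preserving_map M T" and erg: "ergodic_map M T"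
    and S: "S \<in> sets M" "measure M S > 0"
  shows "measure M {x\<in>space M. \<exists>n\<ge>N. (T^^n) x \<in> S} = 1"
proof -
  interpret prob_space M by fact
  have Tm[measurable]: "T \<in> measurable M M" and dT: "distr M M T = M"
    using mp unfolding measure_preserving_map_def by auto
  define F where "F N = {x\<in>space M. \<exists>n\<ge>N. (T^^n) x \<in> S}" for N
  have Feq: "F N = (\<Union>n\<in>{N..}. (T^^n) -` S \<inter> space M)" for N
    unfolding F_def by auto
  have Fs: "F N \<in> sets M" for N
    unfolding Feq using S(1) by (intro sets.countable_UN') (auto intro: measurable_sets measurable_compose_n[OF Tm])
  have Tsp: "x \<in> space M \<Longrightarrow> T x \<in> space M" for x
    using Tm by (rule measurable_space)
  have pre: "T -` F N \<inter> space M = F (Suc N)" for N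
  proof -
    have "x \<in> space M \<Longrightarrow> (T x \<in> F N) = (x \<in> F (Suc N))" for x
    proof -
      assume x: "x \<in> space M"
      have "(T x \<in> F N) = (\<exists>n\<ge>N. (T^^Suc n) x \<in> S)"
        using Tsp[OF x] unfolding F_def by (simp add: funpow_Suc_right del: funpow.simps)
      also have "\<dots> = (\<exists>m\<ge>Suc N. (T^^m) x \<in> S)"
        by (metis Suc_le_D Suc_le_mono)
      finally show ?thesis using x unfolding F_def by simp
    qed
    then show ?thesis unfolding F_def[of "Suc N"] by blast
  qed
  have mF: "measure M (F (Suc N)) = measure M (F N)" for N
  proof -
    have "measure M (F N) = measure (distr M M T) (F N)" using dT by simp
    also have "\<dots> = measure M (T -` F N \<inter> space M)"
      using Fs by (simp add: measure_distr)
    finally show ?thesis using pre by simp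
  qed
  have mF0: "measure M (F N) = measure M (F 0)" for N
    by (induction N) (use mF in auto)
  have dec: "decseq F" unfolding decseq_def F_def by (auto intro: order_trans)
  define L where "L = (\<Inter>N. F N)"
  have "(\<lambda>N. measure M (F N)) \<longlonglongrightarrow> measure M L"
    unfolding L_def using Fs dec by (intro finite_Lim_measure_decseq) auto
  moreover have "(\<lambda>N. measure M (F N)) = (\<lambda>N. measure M (F 0))" using mF0 by (rule ext)
  ultimately have "(\<lambda>N. measure M (F 0)) \<longlonglongrightarrow> measure M L" by simp
  then have mL: "measure M L = measure M (F 0)"
    by (simp add: LIMSEQ_const_iff)
  have Ls: "L \<in> sets M" unfolding L_def using Fs by auto
  have inv: "T -` L \<inter> space M = L"
  proof -
    have "T -` L \<inter> space M = (\<Inter>N. T -` F N \<inter> space M)" unfolding L_def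
      by blast
    also have "\<dots> = (\<Inter>N. F (Suc N))" using pre by simp
    also have "\<dots> = L" unfolding L_def
    proof (intro equalityI subsetI)
      fix x assume "x \<in> (\<Inter>N. F (Suc N))"
      then have "x \<in> F (Suc N)" for N by blast
      then have "x \<in> F N" for N using dec unfolding decseq_def by (meson le_SucI order_refl subsetD)
      then show "x \<in> (\<Inter>N. F N)" by blast
    qed blast
    finally show ?thesis .
  qed
  have "S \<subseteq> F 0" unfolding F_def using sets.sets_into_space[OF S(1)] by (auto intro: exI[of _ 0])
  then have "measure M S \<le> measure M (F 0)" using Fs by (intro finite_measure_mono) auto
  then have "measure M L > 0" using mL S by simp
  then have "measure M L = 1" using erg Ls inv unfolding ergodic_map_def by auto
  then have "measure M (F N) = 1" using mL mF0[of N] by linarith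
  then show ?thesis unfolding F_def .
qed

theorem lemma3:
  fixes M :: "'a measure" and T :: "'a \<Rightarrow> 'a" and l :: "nat \<Rightarrow> nat"
  assumes "prob_space M"
    and "non_atomic M"
    and "invertible_mp_map M T"
    and "ergodic_map M T"
    and "strict_mono_on {1..} l"
    and "\<forall>n\<ge>1. 0 < l n"
  shows "\<exists>v :: 'a \<Rightarrow> real. v \<in> borel_measurable M \<and> (\<forall>x\<in>space M. 0 \<le> v x) \<and>
           (AE x in M. limsup (\<lambda>n. ereal (v ((T ^^ n) x) / real (l n))) = \<infinity>)"
proof -
  interpret prob_space M by fact
  have mp: "measure_preserving_map M T" using assms(3) unfolding invertible_mp_map_def by auto
  have Tm[measurable]: "T \<in> measurable M M" using mp unfolding measure_preserving_map_def by auto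
  obtain S :: "nat \<Rightarrow> 'a set" where S: "\<And>k. S k \<in> sets M" "\<And>k. measure M (S k) > 0"
    and disj: "\<And>i j. i \<noteq> j \<Longrightarrow> S i \<inter> S j = {}"
    using disjoint_pos_sets[OF assms(1,2)] by blast
  define G where "G k W = {x\<in>space M. \<exists>n\<in>{k..W}. (T^^n) x \<in> S k}" for k W
  have Gs: "G k W \<in> sets M" for k W
  proof -
    have "G k W = (\<Union>n\<in>{k..W}. (T^^n) -` S k \<inter> space M)" unfolding G_def by auto
    then show ?thesis using S(1) by (auto intro: measurable_sets measurable_compose_n[OF Tm])
  qed
  have "\<exists>W. measure M (G k W) > 1 - 1 / (real k + 1)" for k
  proof -
    have inc: "incseq (G k)" unfolding incseq_def G_def by fastforce
    have "(\<Union>W. G k W) = {x\<in>space M. \<exists>n\<ge>k. (T^^n) x \<in> S k}" unfolding G_def by auto (meson atLeastAtMost_iff order_refl)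
    then have "measure M (\<Union>W. G k W) = 1"
      using recurrence[OF assms(1) mp assms(4) S(1) S(2)] by simp
    moreover have "(\<lambda>W. measure M (G k W)) \<longlonglongrightarrow> measure M (\<Union>W. G k W)"
      using Gs inc by (intro finite_Lim_measure_incseq) auto
    ultimately have lim: "(\<lambda>W. measure M (G k W)) \<longlonglongrightarrow> 1" by simp
    have "1 - 1 / (real k + 1) < 1" by simp
    from order_tendstoD(1)[OF lim this] have "\<forall>\<^sub>F W in sequentially. measure M (G k W) > 1 - 1 / (real k + 1)" .
    then show ?thesis by (meson eventually_sequentially order_refl)
  qed
  then obtain W where W: "\<And>k. measure M (G k (W k)) > 1 - 1 / (real k + 1)" by metis
  define c where "c k = real k * real (l (W k))" for k
  define v where "v x = (\<Sum>i. c i * indicator (S i) x)" for x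
  have vS: "x \<in> S k \<Longrightarrow> v x = c k" for x k
  proof -
    assume x: "x \<in> S k"
    have "(\<lambda>i. c i * indicator (S i) x) = (\<lambda>i. if i = k then c i else 0)"
    proof
      fix i show "c i * indicator (S i) x = (if i = k then c i else 0)"
        using x disj[of i k] by (cases "i = k") (auto simp: indicator_def)
    qed
    then show ?thesis unfolding v_def using sums_single[of k c] sums_unique by metis
  qed
  have v0: "(\<forall>k. x \<notin> S k) \<Longrightarrow> v x = 0" for x
    unfolding v_def by (simp add: indicator_def)
  have cnn: "c k \<ge> 0" for k unfolding c_def by simp
  have vnn: "v x \<ge> 0" for x
    by (cases "\<exists>k. x \<in> S k") (use vS v0 cnn in auto)
  have vm: "v \<in> borel_measurable M"
    unfolding v_def by (intro borel_measurable_suminf borel_measurable_times borel_measurable_const borel_measurable_indicator S(1))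
  define U where "U K = {x\<in>space M. \<exists>k\<ge>K. x \<in> G k (W k)}" for K
  have Us: "U K \<in> sets M" for K
  proof -
    have "U K = (\<Union>k\<in>{K..}. G k (W k))" unfolding U_def G_def by auto
    then show ?thesis using Gs by auto
  qed
  have "measure M (U K) = 1" for K
  proof (rule ccontr)
    assume ne: "measure M (U K) \<noteq> 1"
    have le1: "measure M (U K) \<le> 1" by (rule prob_le_1)
    then have "1 - measure M (U K) > 0" using ne le1 by linarith
    then obtain j where j: "1 / (real j + 1) < 1 - measure M (U K)" and jK: "j \<ge> K"
    proof -
      from \<open>1 - measure M (U K) > 0\<close> obtain n :: nat where n: "n > 0" "inverse (real n) < 1 - measure M (U K)"
        using ex_inverse_of_nat_less by blast
      have "1 / (real (n + K) + 1) \<le> inverse (real n)"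
        using n(1) by (simp add: inverse_eq_divide frac_le)
      then show ?thesis using n by (intro that[of "n + K"]) auto
    qed
    have "G j (W j) \<subseteq> U K" unfolding U_def G_def using jK by auto
    then have "measure M (G j (W j)) \<le> measure M (U K)" using Us by (intro finite_measure_mono) auto
    then show False using W[of j] j by linarith
  qed
  then have "AE x in M. x \<in> U K" for K by (intro AE_prob_1)
  then have AEU: "AE x in M. \<forall>K. x \<in> U K" by (simp add: AE_all_countable)
  have "AE x in M. limsup (\<lambda>n. ereal (v ((T ^^ n) x) / real (l n))) = \<infinity>"
    using AEU
  proof (rule AE_mp, intro AE_I2 impI)
    fix x assume x: "x \<in> space M" and U: "\<forall>K. x \<in> U K"
    have "(SUP m\<in>{N..}. ereal (v ((T ^^ m) x) / real (l m))) = \<infinity>" for N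
    proof (rule SUP_PInfty)
      fix r :: nat
      obtain k where k: "k \<ge> max (max N r) 1" "x \<in> G k (W k)" using U unfolding U_def by blast
      then obtain n where n: "n \<in> {k..W k}" "(T^^n) x \<in> S k" unfolding G_def by blast
      have n1: "n \<ge> 1" "W k \<ge> 1" using n k by auto
      have ln: "l n \<le> l (W k)"
        using n n1 by (intro strict_mono_on_leD[OF assms(5)]) auto
      have lpos: "real (l n) > 0" using assms(6) n1 by auto
      have "real k * real (l n) \<le> c k" unfolding c_def using ln by (simp add: mult_left_mono)
      then have "real k \<le> v ((T^^n) x) / real (l n)"
        using vS[OF n(2)] lpos by (simp add: pos_le_divide_eq)
      moreover have "real r \<le> real k" using k by simp
      ultimately have "ereal (real r) \<le> ereal (v ((T ^^ n) x) / real (l n))" by simp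
      moreover have "n \<in> {N..}" using n k by auto
      ultimately show "\<exists>i\<in>{N..}. ereal (real r) \<le> ereal (v ((T ^^ i) x) / real (l i))" by blast
    qed
    then show "limsup (\<lambda>n. ereal (v ((T ^^ n) x) / real (l n))) = \<infinity>"
      unfolding limsup_INF_SUP by simp
  qed
  then show ?thesis using vm vnn by blast
qed

end
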